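(* Let $\Pi$ be an $n$-dimensional linear space satisfying the exchange axiom and the axiom (P2), let $0<k<n-1$, let $B=\{p_1,\dots,p_{n+1}\}$ be a base of $\Pi$, and let $\mathcal{B}_k$ be the base subset of $\mathcal{G}_k(\Pi)$ associated with $B$. If $\mathcal{R}$ is a maximal inexact subset of $\mathcal{B}_k$, then there exist distinct indices $i,j$ such that $$\mathcal{R}=\mathcal{B}_k(-i)\cup\mathcal{B}_k(p_ip_j).$$
   Context: A linear space $\Pi=(P,\mathcal{L})$ is a set $P$ of points with a family $\mathcal{L}$ of proper subsets (lines) such that each line has at least two points and any two distinct points $p,q$ lie on exactly one line $pq$. A subspace is a set $S\subset P$ with $pq\subset S$ for all distinct $p,q\in S$; $\overline{X}$ is the smallest subspace containing $X$. A set $X$ is independent if $\overline{X}$ is not spanned by a proper subset of $X$; a base of $\Pi$ is an independent set spanning $P$. A subspace is $m$-dimensional if $m+1$ is the smallest number of points spanning it. Exchange axiom: for every $X\subset P$ and $p_1,p_2\in P\setminus\overline{X}$, $p_2\in\overline{X\cup\{p_1\}}$ implies $p_1\in\overline{X\cup\{p_2\}}$. Axiom (P2): every line has at least three points. $\mathcal{G}_k(\Pi)$ is the set of $k$-dimensional subspaces; the base subset of $\mathcal{G}_k(\Pi)$ associated with a base $B$ is the set of all $k$-dimensional subspaces spanned by points of $B$. A subset $\mathcal{R}\subset\mathcal{B}_k$ is exact if $\mathcal{B}_k$ is the unique base subset of $\mathcal{G}_k(\Pi)$ containing $\mathcal{R}$, and inexact otherwise; a maximal inexact subset is one maximal under inclusion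 among inexact subsets of $\mathcal{B}_k$. $\mathcal{B}_k(-i)$ is the set of elements of $\mathcal{B}_k$ not containing $p_i$, and $\mathcal{B}_k(p_ip_j)$ is the set of elements of $\mathcal{B}_k$ containing the line $p_ip_j$. *)

theory Defs
  imports Main
begin

definition linear_space :: "'a set \<Rightarrow> 'a set set \<Rightarrow> bool" where
  "linear_space P L \<longleftrightarrow>
     (\<forall>l\<in>L. l \<subset> P \<and> (\<exists>x y. x \<in> l \<and> y \<in> l \<and> x \<noteq> y)) \<and>
     (\<forall>p\<in>P. \<forall>q\<in>P. p \<noteq> q \<longrightarrow> (\<exists>!l. l \<in> L \<and> p \<in> l \<and> q \<in> l))"

definition line_of :: "'a set set \<Rightarrow> 'a \<Rightarrow> 'a \<Rightarrow> 'a set" where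
  "line_of L p q = (THE l. l \<in> L \<and> p \<in> l \<and> q \<in> l)"

definition subspace :: "'a set \<Rightarrow> 'a set set \<Rightarrow> 'a set \<Rightarrow> bool" where
  "subspace P L S \<longleftrightarrow> S \<subseteq> P \<and>
     (\<forall>p\<in>S. \<forall>q\<in>S. p \<noteq> q \<longrightarrow> line_of L p q \<subseteq> S)"

definition span :: "'a set \<Rightarrow> 'a set set \<Rightarrow> 'a set \<Rightarrow> 'a set" where
  "span P L X = \<Inter>{S. subspace P L S \<and> X \<subseteq> S}"

definition independent :: "'a set \<Rightarrow> 'a set set \<Rightarrow> 'a set \<Rightarrow> bool" where
  "independent P L X \<longleftrightarrow> X \<subseteq> P \<and> (\<forall>Y. Y \<subset> X \<longrightarrow> span P L Y \<noteq> span P L X)"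

definition is_base :: "'a set \<Rightarrow> 'a set set \<Rightarrow> 'a set \<Rightarrow> bool" where
  "is_base P L B \<longleftrightarrow> independent P L B \<and> span P L B = P"

definition has_dim :: "'a set \<Rightarrow> 'a set set \<Rightarrow> 'a set \<Rightarrow> nat \<Rightarrow> bool" where
  "has_dim P L S m \<longleftrightarrow> subspace P L S \<and>
     (\<exists>X. X \<subseteq> P \<and> finite X \<and> card X = m + 1 \<and> span P L X = S) \<and>
     (\<forall>X. X \<subseteq> P \<and> finite X \<and> span P L X = S \<longrightarrow> m + 1 \<le> card X)"

definition exchange_axiom :: "'a set \<Rightarrow> 'a set set \<Rightarrow> bool" where
  "exchange_axiom P L \<longleftrightarrow>
     (\<forall>X p1 p2. X \<subseteq> P \<longrightarrow> p1 \<in> P - span P L X \<longrightarrow> p2 \<in> P - span P L X \<longrightarrow>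
        p2 \<in> span P L (X \<union> {p1}) \<longrightarrow> p1 \<in> span P L (X \<union> {p2}))"

definition axiom_P2 :: "'a set set \<Rightarrow> bool" where
  "axiom_P2 L \<longleftrightarrow> (\<forall>l\<in>L. \<exists>x y z. x \<in> l \<and> y \<in> l \<and> z \<in> l \<and> x \<noteq> y \<and> y \<noteq> z \<and> x \<noteq> z)"

definition Grass :: "'a set \<Rightarrow> 'a set set \<Rightarrow> nat \<Rightarrow> 'a set set" where
  "Grass P L k = {S. has_dim P L S k}"

definition base_subset :: "'a set \<Rightarrow> 'a set set \<Rightarrow> nat \<Rightarrow> 'a set \<Rightarrow> 'a set set" where
  "base_subset P L k B = {S \<in> Grass P L k. \<exists>X. X \<subseteq> B \<and> span P L X = S}"

definition exact_subset :: "'a set \<Rightarrow> 'a set set \<Rightarrow> nat \<Rightarrow> 'a set \<Rightarrow> 'a set set \<Rightarrow> bool" where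
  "exact_subset P L k B R \<longleftrightarrow> R \<subseteq> base_subset P L k B \<and>
     (\<forall>B'. is_base P L B' \<and> R \<subseteq> base_subset P L k B' \<longrightarrow>
            base_subset P L k B' = base_subset P L k B)"

definition inexact_subset :: "'a set \<Rightarrow> 'a set set \<Rightarrow> nat \<Rightarrow> 'a set \<Rightarrow> 'a set set \<Rightarrow> bool" where
  "inexact_subset P L k B R \<longleftrightarrow> R \<subseteq> base_subset P L k B \<and> \<not> exact_subset P L k B R"

definition maximal_inexact :: "'a set \<Rightarrow> 'a set set \<Rightarrow> nat \<Rightarrow> 'a set \<Rightarrow> 'a set set \<Rightarrow> bool" where
  "maximal_inexact P L k B R \<longleftrightarrow> inexact_subset P L k B R \<and>
     (\<forall>R'. R \<subset> R' \<and> R' \<subseteq> base_subset P L k B \<longrightarrow> \<not> inexact_subset P L k B R')"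

end

theory Submission
  imports Defs
begin


locale ls = fixes P :: "'a set" and L :: "'a set set"
  assumes ls: "linear_space P L"
begin

lemma ls1: "\<forall>l\<in>L. l \<subset> P \<and> (\<exists>x y. x \<in> l \<and> y \<in> l \<and> x \<noteq> y)"
  using ls unfolding linear_space_def by (rule conjunct1)

lemma ls2': "\<forall>p\<in>P. \<forall>q\<in>P. p \<noteq> q \<longrightarrow> (\<exists>!l. l \<in> L \<and> p \<in> l \<and> q \<in> l)"
  using ls unfolding linear_space_def by (rule conjunct2)

lemma ls2: "p \<in> P \<Longrightarrow> q \<in> P \<Longrightarrow> p \<noteq> q \<Longrightarrow> (\<exists>!l. l \<in> L \<and> p \<in> l \<and> q \<in> l)"
  using ls2' by simp

lemma line_sub: "l \<in> L \<Longrightarrow> l \<subseteq> P"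
  using ls1 by blast

lemma line_props:
  assumes "p \<in> P" "q \<in> P" "p \<noteq> q"
  shows "line_of L p q \<in> L \<and> p \<in> line_of L p q \<and> q \<in> line_of L p q"
proof -
  have "\<exists>!l. l \<in> L \<and> p \<in> l \<and> q \<in> l" using ls2 assms by simp
  then show ?thesis unfolding line_of_def by (rule theI')
qed

lemma line_unique:
  assumes "l \<in> L" "p \<in> l" "q \<in> l" "p \<noteq> q"
  shows "line_of L p q = l"
proof -
  have pq: "p \<in> P" "q \<in> P" using line_sub assms by auto
  have "\<exists>!l. l \<in> L \<and> p \<in> l \<and> q \<in> l" using ls2 pq assms(4) by simp
  then show ?thesis unfolding line_of_def by (rule the1_equality) (use assms in simp)
qed

lemma subspace_P: "subspace P L P"
  unfolding subspace_def using line_props line_sub by blast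

lemma span_sub: "subspace P L S \<Longrightarrow> X \<subseteq> S \<Longrightarrow> span P L X \<subseteq> S"
  unfolding span_def by blast

lemma span_P: "X \<subseteq> P \<Longrightarrow> span P L X \<subseteq> P"
  using span_sub subspace_P by blast

lemma span_subspace: "X \<subseteq> P \<Longrightarrow> subspace P L (span P L X)"
proof -
  assume X: "X \<subseteq> P"
  show ?thesis unfolding subspace_def
  proof (intro conjI ballI impI)
    show "span P L X \<subseteq> P" using span_P X .
    fix a b assume a: "a \<in> span P L X" and b: "b \<in> span P L X" and ab: "a \<noteq> b"
    show "line_of L a b \<subseteq> span P L X" unfolding span_def
    proof (rule Inter_greatest)
      fix S assume "S \<in> {S. subspace P L S \<and> X \<subseteq> S}"
      then have S: "subspace P L S" "X \<subseteq> S" by auto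
      have "a \<in> S" "b \<in> S" using a b S unfolding span_def by auto
      then show "line_of L a b \<subseteq> S" using S(1) ab unfolding subspace_def by blast
    qed
  qed
qed

lemma span_inc: "X \<subseteq> P \<Longrightarrow> X \<subseteq> span P L X"
  unfolding span_def using subspace_P by blast

lemma span_mono: "X \<subseteq> Y \<Longrightarrow> Y \<subseteq> P \<Longrightarrow> span P L X \<subseteq> span P L Y"
  by (meson span_inc span_sub span_subspace subset_trans)

lemma span_idem: "subspace P L S \<Longrightarrow> span P L S = S"
proof -
  assume S: "subspace P L S"
  have "S \<subseteq> P" using S unfolding subspace_def by blast
  then have "S \<subseteq> span P L S" by (rule span_inc)
  moreover have "span P L S \<subseteq> S" using span_sub[OF S] by blast
  ultimately show ?thesis by blast
qed

lemma span_empty: "span P L {} = {}"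
  by (rule span_idem) (simp add: subspace_def)

lemma span_single: "x \<in> P \<Longrightarrow> span P L {x} = {x}"
  by (rule span_idem) (simp add: subspace_def)

lemma line_in_span: "X \<subseteq> P \<Longrightarrow> a \<in> span P L X \<Longrightarrow> b \<in> span P L X \<Longrightarrow> a \<noteq> b
   \<Longrightarrow> line_of L a b \<subseteq> span P L X"
  using span_subspace unfolding subspace_def by blast

lemma fin_char:
  assumes "X \<subseteq> P" "x \<in> span P L X"
  shows "\<exists>Y. finite Y \<and> Y \<subseteq> X \<and> x \<in> span P L Y"
proof -
  define F where "F = \<Union>{span P L Y | Y. finite Y \<and> Y \<subseteq> X}"
  have FP: "F \<subseteq> P" unfolding F_def using assms(1) span_P by blast
  have "subspace P L F"
    unfolding subspace_def
  proof (intro conjI FP ballI impI)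
    fix a b assume a: "a \<in> F" and b: "b \<in> F" and ab: "a \<noteq> b"
    from a obtain Y1 where Y1: "finite Y1" "Y1 \<subseteq> X" "a \<in> span P L Y1" unfolding F_def by blast
    from b obtain Y2 where Y2: "finite Y2" "Y2 \<subseteq> X" "b \<in> span P L Y2" unfolding F_def by blast
    have s: "Y1 \<union> Y2 \<subseteq> P" using Y1 Y2 assms(1) by blast
    have "a \<in> span P L (Y1 \<union> Y2)" "b \<in> span P L (Y1 \<union> Y2)"
      using span_mono[OF _ s] Y1 Y2 by blast+
    then have "line_of L a b \<subseteq> span P L (Y1 \<union> Y2)" using line_in_span s ab by blast
    moreover have "span P L (Y1 \<union> Y2) \<subseteq> F" unfolding F_def using Y1 Y2 by blast
    ultimately show "line_of L a b \<subseteq> F" by blast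
  qed
  moreover have "X \<subseteq> F"
  proof
    fix y assume "y \<in> X"
    then have "y \<in> span P L {y}" "finite {y}" "{y} \<subseteq> X" using span_single assms(1) by auto
    then show "y \<in> F" unfolding F_def by blast
  qed
  ultimately have "span P L X \<subseteq> F" using span_sub by blast
  then have "x \<in> F" using assms(2) by blast
  then obtain Y where "finite Y \<and> Y \<subseteq> X" "x \<in> span P L Y" unfolding F_def by auto
  then show ?thesis by blast
qed

lemma indep_notin:
  assumes "independent P L C" "b \<in> C"
  shows "b \<notin> span P L (C - {b})"
proof
  assume h: "b \<in> span P L (C - {b})"
  have CP: "C \<subseteq> P" using assms(1) unfolding independent_def by (rule conjunct1)
  have CbP: "C - {b} \<subseteq> P" using CP by (rule subset_trans[rotated]) blast
  have "C - {b} \<subseteq> span P L (C - {b})" using CbP by (rule span_inc)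
  then have Cs: "C \<subseteq> span P L (C - {b})" using h by blast
  have sub: "subspace P L (span P L (C - {b}))" using CbP by (rule span_subspace)
  have e1: "span P L C \<subseteq> span P L (C - {b})" using span_sub[OF sub Cs] .
  have e2: "span P L (C - {b}) \<subseteq> span P L C" using span_mono[OF _ CP] by blast
  have eq: "span P L (C - {b}) = span P L C" using e1 e2 by (rule subset_antisym[rotated])
  have ps: "C - {b} \<subset> C" using assms(2) by blast
  have "\<forall>Y. Y \<subset> C \<longrightarrow> span P L Y \<noteq> span P L C" using assms(1) unfolding independent_def by (rule conjunct2)
  then show False using ps eq by blast
qed

lemma indep_sub_notin:
  assumes "independent P L C" "Z \<subseteq> C" "b \<in> C" "b \<notin> Z"
  shows "b \<notin> span P L Z"
proof -
  have CP: "C \<subseteq> P" using assms(1) unfolding independent_def by (rule conjunct1)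
  have CbP: "C - {b} \<subseteq> P" using CP by blast
  have "Z \<subseteq> C - {b}" using assms(2,4) by blast
  then have "span P L Z \<subseteq> span P L (C - {b})" using CbP by (rule span_mono)
  moreover have "b \<notin> span P L (C - {b})" using assms(1,3) by (rule indep_notin)
  ultimately show ?thesis by blast
qed

lemma indep_span_inter:
  assumes "independent P L C" "Z \<subseteq> C"
  shows "span P L Z \<inter> C = Z"
proof -
  have CP: "C \<subseteq> P" using assms(1) unfolding independent_def by (rule conjunct1)
  have ZP: "Z \<subseteq> P" using CP assms(2) by blast
  have "Z \<subseteq> span P L Z" using ZP by (rule span_inc)
  moreover have "\<And>b. b \<in> C \<Longrightarrow> b \<notin> Z \<Longrightarrow> b \<notin> span P L Z"
    using indep_sub_notin[OF assms] by blast
  ultimately show ?thesis using assms(2) by blast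
qed

lemma base_subset_span:
  assumes "S \<in> base_subset P L k C" "C \<subseteq> P"
  shows "S = span P L (S \<inter> C)" "subspace P L S"
proof -
  obtain X where X: "X \<subseteq> C" "span P L X = S" using assms(1) unfolding base_subset_def by blast
  have XP: "X \<subseteq> P" using X(1) assms(2) by blast
  have sS: "subspace P L S" using span_subspace[OF XP] X(2) by simp
  have "X \<subseteq> span P L X" using XP by (rule span_inc)
  then have "X \<subseteq> S \<inter> C" using X by blast
  moreover have "S \<inter> C \<subseteq> P" using assms(2) by blast
  ultimately have "span P L X \<subseteq> span P L (S \<inter> C)" by (rule span_mono)
  moreover have "span P L (S \<inter> C) \<subseteq> S" using span_sub[OF sS] by blast
  ultimately show "S = span P L (S \<inter> C)" using X by blast
  show "subspace P L S" by (rule sS)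
qed

end

locale lsx = ls + assumes ex: "exchange_axiom P L"
begin

lemma inter_step:
  assumes ind: "independent P L C" and fin: "finite D"
  shows "A \<union> D \<subseteq> C \<Longrightarrow> A \<inter> D = {} \<Longrightarrow> D \<inter> Z = {} \<Longrightarrow> Z \<subseteq> C \<Longrightarrow>
     x \<in> span P L (A \<union> D) \<Longrightarrow> x \<in> span P L Z \<Longrightarrow> x \<in> span P L A"
  using fin
proof (induction D rule: finite_induct)
  case empty then show ?case by simp
next
  case (insert b D)
  note IH = insert.IH
  have bD: "b \<notin> D" by (rule insert.hyps(2))
  have p1: "A \<union> insert b D \<subseteq> C" and p2: "A \<inter> insert b D = {}" and p3: "insert b D \<inter> Z = {}"
    and p4: "Z \<subseteq> C" and p5: "x \<in> span P L (A \<union> insert b D)" and p6: "x \<in> span P L Z"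
    using insert.prems by auto
  have CP: "C \<subseteq> P" using ind unfolding independent_def by (rule conjunct1)
  define A' where "A' = A \<union> D"
  show ?case
  proof (cases "x \<in> span P L A'")
    case True
    have "A \<union> D \<subseteq> C" "A \<inter> D = {}" "D \<inter> Z = {}" using p1 p2 p3 by auto
    then show ?thesis using IH p4 p6 True unfolding A'_def by blast
  next
    case False
    have A'C: "A' \<subseteq> C" using p1 unfolding A'_def by blast
    have A'P: "A' \<subseteq> P" using A'C CP by blast
    have ZP: "Z \<subseteq> P" using p4 CP by blast
    have bC: "b \<in> C" using p1 by blast
    have bA': "b \<notin> A'" using p2 bD unfolding A'_def by blast
    have bns: "b \<notin> span P L A'" using indep_sub_notin[OF ind A'C bC bA'] .
    have xP: "x \<in> P" using span_P[OF ZP] p6 by blast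
    have bP: "b \<in> P" using bC CP by blast
    have "A \<union> insert b D = A' \<union> {b}" unfolding A'_def by blast
    then have xs: "x \<in> span P L (A' \<union> {b})" using p5 by simp
    have exa: "\<forall>X p1 p2. X \<subseteq> P \<longrightarrow> p1 \<in> P - span P L X \<longrightarrow> p2 \<in> P - span P L X \<longrightarrow>
        p2 \<in> span P L (X \<union> {p1}) \<longrightarrow> p1 \<in> span P L (X \<union> {p2})"
      using ex unfolding exchange_axiom_def .
    have b1: "b \<in> span P L (A' \<union> {x})"
      using exa[rule_format, OF A'P _ _ xs] bns False xP bP by blast
    have AZP: "A' \<union> Z \<subseteq> P" using A'P ZP by blast
    have "span P L (A' \<union> {x}) \<subseteq> span P L (A' \<union> Z)"
    proof (rule span_sub)
      show "subspace P L (span P L (A' \<union> Z))" using span_subspace[OF AZP] .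
      have "span P L Z \<subseteq> span P L (A' \<union> Z)" using span_mono[OF _ AZP] by blast
      moreover have "A' \<union> Z \<subseteq> span P L (A' \<union> Z)" using span_inc[OF AZP] .
      ultimately show "A' \<union> {x} \<subseteq> span P L (A' \<union> Z)" using p6 by blast
    qed
    moreover have "b \<notin> span P L (A' \<union> Z)"
    proof (rule indep_sub_notin[OF ind _ bC])
      show "A' \<union> Z \<subseteq> C" using A'C p4 by blast
      show "b \<notin> A' \<union> Z" using bA' p3 by blast
    qed
    ultimately show ?thesis using b1 by blast
  qed
qed

lemma inter2:
  assumes "independent P L C" "Z1 \<subseteq> C" "Z2 \<subseteq> C" "finite Z1"
  shows "span P L Z1 \<inter> span P L Z2 \<subseteq> span P L (Z1 \<inter> Z2)"
proof
  fix x assume x: "x \<in> span P L Z1 \<inter> span P L Z2"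
  have e: "Z1 = (Z1 \<inter> Z2) \<union> (Z1 - Z2)" by blast
  show "x \<in> span P L (Z1 \<inter> Z2)"
    apply (rule inter_step[OF assms(1), of "Z1 - Z2" "Z1 \<inter> Z2" Z2])
    using assms x e by auto
qed

lemma interN:
  assumes ind: "independent P L C" and "finite J" "J \<noteq> {}"
  shows "(\<forall>j\<in>J. Z j \<subseteq> C \<and> finite (Z j)) \<Longrightarrow> (\<Inter>j\<in>J. span P L (Z j)) \<subseteq> span P L (\<Inter>j\<in>J. Z j)"
  using assms(2,3)
proof (induction J rule: finite_ne_induct)
  case (singleton x) then show ?case by simp
next
  case (insert a J)
  have "(\<Inter>j\<in>insert a J. span P L (Z j)) \<subseteq> span P L (Z a) \<inter> span P L (\<Inter>j\<in>J. Z j)"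
    using insert by auto
  also have "\<dots> \<subseteq> span P L (Z a \<inter> (\<Inter>j\<in>J. Z j))"
    by (rule inter2[OF ind]) (use insert in blast)+
  finally show ?case by simp
qed

end


context ls begin

lemma dimG:
  assumes hmin: "\<And>X. X \<subseteq> P \<Longrightarrow> finite X \<Longrightarrow> span P L X = P \<Longrightarrow> n + 1 \<le> card X"
    and fin: "finite B0" and B0P: "B0 \<subseteq> P" and cB0: "card B0 = n + 1" and sB0: "span P L B0 = P"
    and Y: "Y \<subseteq> B0" and cY: "card Y = k + 1"
  shows "has_dim P L (span P L Y) k"
  unfolding has_dim_def
proof (intro conjI allI impI)
  have YP: "Y \<subseteq> P" using Y B0P by blast
  show "subspace P L (span P L Y)" using YP by (rule span_subspace)
  have "finite Y" using Y fin by (rule finite_subset)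
  then show "\<exists>X. X \<subseteq> P \<and> finite X \<and> card X = k + 1 \<and> span P L X = span P L Y"
    using YP cY by blast
  fix X assume X: "X \<subseteq> P \<and> finite X \<and> span P L X = span P L Y"
  show "k + 1 \<le> card X"
  proof (rule ccontr)
    assume "\<not> k + 1 \<le> card X"
    then have cX: "card X \<le> k" by simp
    define Z where "Z = X \<union> (B0 - Y)"
    have ZP: "Z \<subseteq> P" unfolding Z_def using X B0P by blast
    have fZ: "finite Z" unfolding Z_def using X fin by blast
    have "card Z \<le> card X + card (B0 - Y)" unfolding Z_def by (rule card_Un_le)
    moreover have "card (B0 - Y) = n + 1 - (k + 1)" using card_Diff_subset[OF finite_subset[OF Y fin] Y] cB0 cY by simp
    moreover have "k + 1 \<le> n + 1" using card_mono[OF fin Y] cB0 cY by simp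
    ultimately have cZ: "card Z \<le> n" using cX by linarith
    have sZ: "subspace P L (span P L Z)" using ZP by (rule span_subspace)
    have Zs: "Z \<subseteq> span P L Z" using ZP by (rule span_inc)
    have "span P L X \<subseteq> span P L Z" using span_mono[OF _ ZP] unfolding Z_def by blast
    moreover have "Y \<subseteq> span P L Y" using YP by (rule span_inc)
    ultimately have "Y \<subseteq> span P L Z" using X by blast
    moreover have "B0 - Y \<subseteq> span P L Z" using Zs unfolding Z_def by blast
    ultimately have "B0 \<subseteq> span P L Z" by blast
    then have "span P L B0 \<subseteq> span P L Z" using span_sub[OF sZ] by blast
    then have "span P L Z = P" using sB0 span_P[OF ZP] by blast
    then have "n + 1 \<le> card Z" using hmin[OF ZP fZ] by blast
    then show False using cZ by simp
  qed
qed

lemma indep_of_card: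
  assumes hmin: "\<And>X. X \<subseteq> P \<Longrightarrow> finite X \<Longrightarrow> span P L X = P \<Longrightarrow> n + 1 \<le> card X"
    and fin: "finite B0" and B0P: "B0 \<subseteq> P" and cB0: "card B0 = n + 1" and sB0: "span P L B0 = P"
  shows "is_base P L B0"
  unfolding is_base_def independent_def
proof (intro conjI allI impI B0P sB0)
  fix Y assume Y: "Y \<subset> B0"
  have "card Y < card B0" using Y fin by (rule psubset_card_mono[rotated])
  moreover have "finite Y" "Y \<subseteq> P" using Y fin B0P finite_subset by auto
  ultimately show "span P L Y \<noteq> span P L B0"
  proof (intro notI)
    assume c: "card Y < card B0" "finite Y" "Y \<subseteq> P" "span P L Y = span P L B0"
    then have "n + 1 \<le> card Y" using hmin sB0 by simp
    then show False using c cB0 by simp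
  qed
qed

lemma base_finite:
  assumes b: "is_base P L B'" and fin: "finite B0" and B0P: "B0 \<subseteq> P" and sB0: "span P L B0 = P"
  shows "finite B'"
proof -
  have iB: "independent P L B'" using b unfolding is_base_def by (rule conjunct1)
  have sB': "span P L B' = P" using b unfolding is_base_def by (rule conjunct2)
  have B'P: "B' \<subseteq> P" using iB unfolding independent_def by (rule conjunct1)
  have ind: "\<forall>Y. Y \<subset> B' \<longrightarrow> span P L Y \<noteq> span P L B'" using iB unfolding independent_def by (rule conjunct2)
  have "\<forall>b\<in>B0. \<exists>Y. finite Y \<and> Y \<subseteq> B' \<and> b \<in> span P L Y"
  proof
    fix b assume "b \<in> B0"
    then have "b \<in> span P L B'" using B0P sB' by blast
    then show "\<exists>Y. finite Y \<and> Y \<subseteq> B' \<and> b \<in> span P L Y" using fin_char[OF B'P] by blast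
  qed
  then obtain f where f: "\<And>b. b \<in> B0 \<Longrightarrow> finite (f b) \<and> f b \<subseteq> B' \<and> b \<in> span P L (f b)"
    by metis
  define Y where "Y = \<Union>(f ` B0)"
  have fY: "finite Y" unfolding Y_def using fin f by blast
  have YB': "Y \<subseteq> B'" unfolding Y_def using f by blast
  have YP: "Y \<subseteq> P" using YB' B'P by blast
  have "B0 \<subseteq> span P L Y"
  proof
    fix b assume bB: "b \<in> B0"
    have "f b \<subseteq> Y" unfolding Y_def using bB by blast
    then have "span P L (f b) \<subseteq> span P L Y" using YP by (rule span_mono)
    then show "b \<in> span P L Y" using f bB by blast
  qed
  then have "span P L B0 \<subseteq> span P L Y" using span_sub[OF span_subspace[OF YP]] by blast
  then have "span P L Y = span P L B'" using sB0 sB' span_P[OF YP] by blast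
  then have "Y = B'" using ind YB' by blast
  then show ?thesis using fY by simp
qed

end


locale mainloc = lsx +
  fixes n k :: nat and p :: "nat \<Rightarrow> 'a"
  assumes hd: "has_dim P L P n" and P2: "axiom_P2 L" and k0: "0 < k" and kn: "k < n - 1"
    and inj: "inj_on p {1..n+1}" and bB: "is_base P L (p ` {1..n+1})"
begin

abbreviation "BB \<equiv> p ` {1..n+1}"

lemma hmin: "X \<subseteq> P \<Longrightarrow> finite X \<Longrightarrow> span P L X = P \<Longrightarrow> n + 1 \<le> card X"
proof -
  assume a: "X \<subseteq> P" "finite X" "span P L X = P"
  have "\<forall>X. X \<subseteq> P \<and> finite X \<and> span P L X = P \<longrightarrow> n + 1 \<le> card X"
    using hd unfolding has_dim_def by (elim conjE)
  then show ?thesis using a by blast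
qed

lemma indB: "independent P L BB" using bB unfolding is_base_def by (rule conjunct1)
lemma spanB: "span P L BB = P" using bB unfolding is_base_def by (rule conjunct2)
lemma BP: "BB \<subseteq> P" using indB unfolding independent_def by (rule conjunct1)
lemma finB: "finite BB" by simp
lemma cardB: "card BB = n + 1" using card_image[OF inj] by simp

lemma pB: "i \<in> {1..n+1} \<Longrightarrow> p i \<in> BB" by blast
lemma pP: "i \<in> {1..n+1} \<Longrightarrow> p i \<in> P" using BP by blast
lemma pinj: "i \<in> {1..n+1} \<Longrightarrow> j \<in> {1..n+1} \<Longrightarrow> i \<noteq> j \<Longrightarrow> p i \<noteq> p j"
  using inj unfolding inj_on_def by blast

lemma T_inexact:
  assumes iI: "i \<in> {1..n+1}" and jI: "j \<in> {1..n+1}" and ij: "i \<noteq> j"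
  shows "inexact_subset P L k BB
     ({S \<in> base_subset P L k BB. p i \<notin> S} \<union> {S \<in> base_subset P L k BB. line_of L (p i) (p j) \<subseteq> S})"
    (is "inexact_subset P L k BB ?T")
proof -
  define a where "a = p i"
  define c where "c = p j"
  have ac: "a \<noteq> c" unfolding a_def c_def using pinj iI jI ij .
  have aB: "a \<in> BB" and cB: "c \<in> BB" unfolding a_def c_def using iI jI by auto
  have aP: "a \<in> P" and cP: "c \<in> P" using aB cB BP by auto
  define l where "l = line_of L a c"
  have lL: "l \<in> L" and al: "a \<in> l" and cl: "c \<in> l" using line_props[OF aP cP ac] unfolding l_def by auto
  have "\<exists>x y z. x \<in> l \<and> y \<in> l \<and> z \<in> l \<and> x \<noteq> y \<and> y \<noteq> z \<and> x \<noteq> z"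
    using P2 lL unfolding axiom_P2_def by blast
  then obtain x y z where xyz: "x \<in> l" "y \<in> l" "z \<in> l" "x \<noteq> y" "y \<noteq> z" "x \<noteq> z" by blast
  have "\<exists>q. q \<in> l \<and> q \<noteq> a \<and> q \<noteq> c"
  proof (cases "x \<noteq> a \<and> x \<noteq> c")
    case True then show ?thesis using xyz by blast
  next
    case False
    show ?thesis
    proof (cases "y \<noteq> a \<and> y \<noteq> c")
      case True then show ?thesis using xyz by blast
    next
      case False2: False
      have "z \<noteq> a \<and> z \<noteq> c" using False False2 xyz by blast
      then show ?thesis using xyz by blast
    qed
  qed
  then obtain q where ql: "q \<in> l" and qa: "q \<noteq> a" and qc: "q \<noteq> c" by blast
  have qP: "q \<in> P" using ql line_sub[OF lL] by blast
  have lqc: "line_of L q c = l" using line_unique[OF lL ql cl qc] .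
  have laq: "line_of L a q = l" using line_unique[OF lL al ql qa[symmetric]] .
  have qnB: "q \<notin> BB"
  proof
    assume qB: "q \<in> BB"
    have BqP: "BB - {q} \<subseteq> P" using BP by blast
    have "BB - {q} \<subseteq> span P L (BB - {q})" using BqP by (rule span_inc)
    then have "a \<in> span P L (BB - {q})" "c \<in> span P L (BB - {q})" using aB cB qa qc by auto
    then have "l \<subseteq> span P L (BB - {q})" unfolding l_def using line_in_span[OF BqP] ac by blast
    then have "q \<in> span P L (BB - {q})" using ql by blast
    then show False using indep_notin[OF indB qB] by blast
  qed
  define B' where "B' = insert q (BB - {a})"
  have B'P: "B' \<subseteq> P" unfolding B'_def using BP qP by blast
  have finB': "finite B'" unfolding B'_def by simp
  have cB': "card B' = n + 1"
  proof -
    have "card (BB - {a}) = n" using card_Diff_singleton[OF aB] cardB by simp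
    moreover have "q \<notin> BB - {a}" using qnB by blast
    ultimately show ?thesis unfolding B'_def using finB by simp
  qed
  have sB'sub: "subspace P L (span P L B')" using B'P by (rule span_subspace)
  have B'span: "B' \<subseteq> span P L B'" using B'P by (rule span_inc)
  have BsB': "BB \<subseteq> span P L B'"
  proof -
    have "q \<in> span P L B'" "c \<in> span P L B'" using B'span ac unfolding B'_def using cB by auto
    then have "line_of L q c \<subseteq> span P L B'" using line_in_span[OF B'P] qc by blast
    then have "a \<in> span P L B'" using lqc al by blast
    moreover have "BB - {a} \<subseteq> span P L B'" using B'span unfolding B'_def by blast
    ultimately show ?thesis by blast
  qed
  have spB': "span P L B' = P"
  proof -
    have "span P L BB \<subseteq> span P L B'" using span_sub[OF sB'sub BsB'] .
    then show ?thesis using spanB span_P[OF B'P] by blast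
  qed
  have baseB': "is_base P L B'" using indep_of_card[OF hmin finB' B'P cB' spB'] by blast
  have Tsub: "?T \<subseteq> base_subset P L k B'"
  proof
    fix S assume ST: "S \<in> ?T"
    then have SBk: "S \<in> base_subset P L k BB" by blast
    then have SG: "S \<in> Grass P L k" unfolding base_subset_def by blast
    obtain X where XB: "X \<subseteq> BB" and XS: "span P L X = S" using SBk unfolding base_subset_def by blast
    have XP: "X \<subseteq> P" using XB BP by blast
    have sS: "subspace P L S" using span_subspace[OF XP] XS by simp
    have XsS: "X \<subseteq> S" using span_inc[OF XP] XS by simp
    have Xint: "S \<inter> BB = X" using indep_span_inter[OF indB XB] XS by simp
    show "S \<in> base_subset P L k B'"
    proof (cases "a \<in> X")
      case False
      then have "X \<subseteq> B'" using XB unfolding B'_def by blast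
      then show ?thesis unfolding base_subset_def using SG XS by blast
    next
      case True
      then have aS: "a \<in> S" using XsS by blast
      then have lS: "l \<subseteq> S" using ST unfolding a_def c_def l_def by blast
      then have cX: "c \<in> X" using cl cB Xint by blast
      define X' where "X' = insert q (X - {a})"
      have X'B': "X' \<subseteq> B'" unfolding X'_def B'_def using XB by blast
      have X'P: "X' \<subseteq> P" using X'B' B'P by blast
      have "X' \<subseteq> S" unfolding X'_def using XsS lS ql by blast
      then have s1: "span P L X' \<subseteq> S" using span_sub[OF sS] by blast
      have X's: "X' \<subseteq> span P L X'" using X'P by (rule span_inc)
      have "q \<in> span P L X'" "c \<in> span P L X'" using X's cX ac unfolding X'_def by auto
      then have "line_of L q c \<subseteq> span P L X'" using line_in_span[OF X'P] qc by blast
      then have "a \<in> span P L X'" using lqc al by blast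
      moreover have "X - {a} \<subseteq> span P L X'" using X's unfolding X'_def by blast
      ultimately have "X \<subseteq> span P L X'" by blast
      then have "S \<subseteq> span P L X'" using span_sub[OF span_subspace[OF X'P]] XS by blast
      then have "span P L X' = S" using s1 by blast
      then show ?thesis unfolding base_subset_def using SG X'B' by blast
    qed
  qed
  have neq: "base_subset P L k B' \<noteq> base_subset P L k BB"
  proof -
    have "card (BB - {a, c}) = n - 1"
    proof -
      have "card (BB - {a, c}) = card BB - card {a, c}" using card_Diff_subset[of "{a,c}" BB] aB cB by simp
      then show ?thesis using cardB ac by simp
    qed
    then have "k \<le> card (BB - {a, c})" using kn by simp
    then obtain W where WB: "W \<subseteq> BB - {a, c}" and cW: "card W = k" and fW: "finite W"
      by (rule obtain_subset_with_card_n)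
    define Y where "Y = insert a W"
    have YB: "Y \<subseteq> BB" unfolding Y_def using WB aB by blast
    have YP: "Y \<subseteq> P" using YB BP by blast
    have "a \<notin> W" using WB by blast
    then have cY: "card Y = k + 1" unfolding Y_def using fW cW by simp
    have hdS: "has_dim P L (span P L Y) k" using dimG[OF hmin finB BP cardB spanB YB cY] .
    have SBk: "span P L Y \<in> base_subset P L k BB"
      unfolding base_subset_def Grass_def using hdS YB by blast
    have "span P L Y \<notin> base_subset P L k B'"
    proof
      assume "span P L Y \<in> base_subset P L k B'"
      then obtain X where XB': "X \<subseteq> B'" and XS: "span P L X = span P L Y"
        unfolding base_subset_def by blast
      have XP: "X \<subseteq> P" using XB' B'P by blast
      have XsS: "X \<subseteq> span P L Y" using span_inc[OF XP] XS by simp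
      have aS: "a \<in> span P L Y" using span_inc[OF YP] unfolding Y_def by blast
      have "q \<notin> span P L Y"
      proof
        assume "q \<in> span P L Y"
        then have "line_of L a q \<subseteq> span P L Y" using line_in_span[OF YP aS] qa by blast
        then have "c \<in> span P L Y" using laq cl by blast
        moreover have "c \<notin> Y" unfolding Y_def using WB ac by blast
        ultimately show False using indep_sub_notin[OF indB YB cB] by blast
      qed
      then have "X \<subseteq> BB - {a}" using XB' XsS unfolding B'_def by blast
      then have "span P L X \<subseteq> span P L (BB - {a})" using BP by (intro span_mono) auto
      then have "a \<in> span P L (BB - {a})" using aS XS by blast
      then show False using indep_notin[OF indB aB] by blast
    qed
    then show ?thesis using SBk by blast
  qed
  show ?thesis
    unfolding inexact_subset_def exact_subset_def
    using baseB' Tsub neq by blast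
qed


lemma R_exact:
  assumes RB: "R \<subseteq> base_subset P L k BB"
    and H: "\<forall>i\<in>{1..n+1}. \<forall>j\<in>{1..n+1}. i \<noteq> j \<longrightarrow> (\<exists>S\<in>R. p i \<in> S \<and> p j \<notin> S)"
  shows "exact_subset P L k BB R"
  unfolding exact_subset_def
proof (intro conjI allI impI RB)
  fix B' assume hB': "is_base P L B' \<and> R \<subseteq> base_subset P L k B'"
  then have bB': "is_base P L B'" and RB': "R \<subseteq> base_subset P L k B'" by auto
  have iB': "independent P L B'" using bB' unfolding is_base_def by (rule conjunct1)
  have sB': "span P L B' = P" using bB' unfolding is_base_def by (rule conjunct2)
  have B'P: "B' \<subseteq> P" using iB' unfolding independent_def by (rule conjunct1)
  have indB': "\<forall>Y. Y \<subset> B' \<longrightarrow> span P L Y \<noteq> span P L B'" using iB' unfolding independent_def by (rule conjunct2)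
  have finB': "finite B'" using base_finite[OF bB' finB BP spanB] .
  have n2: "2 \<le> n" using k0 kn by simp
  have "BB \<subseteq> B'"
  proof
    fix x assume "x \<in> BB"
    then obtain i where iI: "i \<in> {1..n+1}" and xi: "x = p i" by blast
    define J where "J = {1..n+1} - {i}"
    have fJ: "finite J" unfolding J_def by simp
    have Jne: "J \<noteq> {}"
    proof (cases "i = 1")
      case True
      then have "2 \<in> J" unfolding J_def using n2 by simp
      then show ?thesis by (intro notI) simp
    next
      case False
      then have "1 \<in> J" unfolding J_def by simp
      then show ?thesis by (intro notI) simp
    qed
    have "\<forall>j\<in>J. \<exists>S. S \<in> R \<and> p i \<in> S \<and> p j \<notin> S"
    proof
      fix j assume "j \<in> J"
      then have jI: "j \<in> {1..n+1}" and ij: "i \<noteq> j" unfolding J_def by auto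
      have "\<exists>S\<in>R. p i \<in> S \<and> p j \<notin> S" using bspec[OF bspec[OF H iI] jI] ij by (rule mp)
      then show "\<exists>S. S \<in> R \<and> p i \<in> S \<and> p j \<notin> S" by (simp only: Bex_def)
    qed
    then have "\<exists>f. \<forall>j\<in>J. f j \<in> R \<and> p i \<in> f j \<and> p j \<notin> f j" by (rule bchoice)
    then obtain Sf where Sf0: "\<forall>j\<in>J. Sf j \<in> R \<and> p i \<in> Sf j \<and> p j \<notin> Sf j" by (elim exE)
    have Sf: "\<And>j. j \<in> J \<Longrightarrow> Sf j \<in> R \<and> p i \<in> Sf j \<and> p j \<notin> Sf j" using Sf0 by (rule bspec)
    have Sf1: "\<And>j. j \<in> J \<Longrightarrow> Sf j = span P L (Sf j \<inter> BB)"
      using Sf RB base_subset_span(1)[OF _ BP] by blast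
    have Sf2: "\<And>j. j \<in> J \<Longrightarrow> Sf j = span P L (Sf j \<inter> B')"
      using Sf RB' base_subset_span(1)[OF _ B'P] by blast
    have I1: "(\<Inter>j\<in>J. span P L (Sf j \<inter> BB)) \<subseteq> span P L (\<Inter>j\<in>J. Sf j \<inter> BB)"
      by (rule interN[OF indB fJ Jne]) (simp add: finB)
    have "(\<Inter>j\<in>J. Sf j \<inter> BB) \<subseteq> {p i}"
    proof
      fix y assume y: "y \<in> (\<Inter>j\<in>J. Sf j \<inter> BB)"
      then have "y \<in> BB" using Jne by blast
      then obtain m where mI: "m \<in> {1..n+1}" and ym: "y = p m" by blast
      show "y \<in> {p i}"
      proof (cases "m = i")
        case True then show ?thesis using ym by simp
      next
        case False
        then have "m \<in> J" unfolding J_def using mI by blast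
        then have "y \<notin> Sf m" using Sf ym by blast
        moreover have "y \<in> Sf m" using y \<open>m \<in> J\<close> by blast
        ultimately show ?thesis by blast
      qed
    qed
    then have "span P L (\<Inter>j\<in>J. Sf j \<inter> BB) \<subseteq> span P L {p i}"
      using pP[OF iI] by (intro span_mono) auto
    also have "\<dots> = {p i}" using span_single pP[OF iI] by blast
    finally have I1': "(\<Inter>j\<in>J. Sf j) \<subseteq> {p i}" using I1 Sf1 by auto
    have I2: "(\<Inter>j\<in>J. span P L (Sf j \<inter> B')) \<subseteq> span P L (\<Inter>j\<in>J. Sf j \<inter> B')"
      by (rule interN[OF iB' fJ Jne]) (simp add: finB')
    have pi1: "p i \<in> (\<Inter>j\<in>J. Sf j)" using Sf by blast
    have e2: "(\<Inter>j\<in>J. span P L (Sf j \<inter> B')) = (\<Inter>j\<in>J. Sf j)"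
      by (rule INF_cong[OF refl]) (rule Sf2[symmetric])
    have "p i \<in> (\<Inter>j\<in>J. span P L (Sf j \<inter> B'))" using pi1 unfolding e2 .
    then have pin: "p i \<in> span P L (\<Inter>j\<in>J. Sf j \<inter> B')" by (rule subsetD[OF I2])
    have "(\<Inter>j\<in>J. Sf j \<inter> B') \<noteq> {}"
    proof
      assume "(\<Inter>j\<in>J. Sf j \<inter> B') = {}"
      then have "span P L (\<Inter>j\<in>J. Sf j \<inter> B') = {}" by (simp only: span_empty)
      then show False using pin by (simp only: empty_iff)
    qed
    then obtain b where b: "b \<in> (\<Inter>j\<in>J. Sf j \<inter> B')" by blast
    then have "b \<in> B'" using Jne by blast
    moreover have "b \<in> (\<Inter>j\<in>J. Sf j)" using b by blast
    ultimately show "x \<in> B'" using I1' xi by blast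
  qed
  moreover have "\<not> BB \<subset> B'" using indB' spanB sB' by blast
  ultimately have "B' = BB" by blast
  then show "base_subset P L k B' = base_subset P L k BB" by simp
qed

lemma final:
  assumes M: "maximal_inexact P L k BB R"
  shows "\<exists>i\<in>{1..n+1}. \<exists>j\<in>{1..n+1}. i \<noteq> j \<and>
           R = {S \<in> base_subset P L k BB. p i \<notin> S}
             \<union> {S \<in> base_subset P L k BB. line_of L (p i) (p j) \<subseteq> S}"
proof -
  have ie: "inexact_subset P L k BB R" using M unfolding maximal_inexact_def by (rule conjunct1)
  have mx: "\<forall>R'. R \<subset> R' \<and> R' \<subseteq> base_subset P L k BB \<longrightarrow> \<not> inexact_subset P L k BB R'"
    using M unfolding maximal_inexact_def by (rule conjunct2)
  have RB: "R \<subseteq> base_subset P L k BB" using ie unfolding inexact_subset_def by (rule conjunct1)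
  have ne: "\<not> exact_subset P L k BB R" using ie unfolding inexact_subset_def by (rule conjunct2)
  have "\<not> (\<forall>i\<in>{1..n+1}. \<forall>j\<in>{1..n+1}. i \<noteq> j \<longrightarrow> (\<exists>S\<in>R. p i \<in> S \<and> p j \<notin> S))"
    using R_exact[OF RB] ne by blast
  then obtain i j where iI: "i \<in> {1..n+1}" and jI: "j \<in> {1..n+1}" and ij: "i \<noteq> j"
    and Hij: "\<forall>S\<in>R. p i \<in> S \<longrightarrow> p j \<in> S" by blast
  define T where "T = {S \<in> base_subset P L k BB. p i \<notin> S}
             \<union> {S \<in> base_subset P L k BB. line_of L (p i) (p j) \<subseteq> S}"
  have Tie: "inexact_subset P L k BB T" unfolding T_def by (rule T_inexact[OF iI jI ij])
  have TB: "T \<subseteq> base_subset P L k BB" unfolding T_def by blast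
  have RT: "R \<subseteq> T"
  proof
    fix S assume SR: "S \<in> R"
    then have SB: "S \<in> base_subset P L k BB" using RB by blast
    show "S \<in> T"
    proof (cases "p i \<in> S")
      case False then show ?thesis unfolding T_def using SB by blast
    next
      case True
      then have "p j \<in> S" using Hij SR by blast
      moreover have "subspace P L S" using base_subset_span(2)[OF SB BP] .
      ultimately have "line_of L (p i) (p j) \<subseteq> S"
        using True pinj[OF iI jI ij] unfolding subspace_def by blast
      then show ?thesis unfolding T_def using SB by blast
    qed
  qed
  have "R = T"
  proof (rule ccontr)
    assume "R \<noteq> T"
    then have "R \<subset> T" using RT by blast
    then show False using mx TB Tie by blast
  qed
  then show ?thesis unfolding T_def using iI jI ij by blast
qed

end

theorem lemma2p3:
  fixes P :: "'a set" and L :: "'a set set" and n k :: nat and p :: "nat \<Rightarrow> 'a"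
    and R :: "'a set set"
  assumes "linear_space P L"
    and "has_dim P L P n"
    and "exchange_axiom P L"
    and "axiom_P2 L"
    and "0 < k" and "k < n - 1"
    and "inj_on p {1..n+1}"
    and "is_base P L (p ` {1..n+1})"
    and "maximal_inexact P L k (p ` {1..n+1}) R"
  shows "\<exists>i\<in>{1..n+1}. \<exists>j\<in>{1..n+1}. i \<noteq> j \<and>
           R = {S \<in> base_subset P L k (p ` {1..n+1}). p i \<notin> S}
             \<union> {S \<in> base_subset P L k (p ` {1..n+1}). line_of L (p i) (p j) \<subseteq> S}"
proof -
  interpret mainloc P L n k p
  proof (unfold_locales)
    show "linear_space P L" by (fact assms(1))
    show "exchange_axiom P L" by (fact assms(3))
    show "has_dim P L P n" by (fact assms(2))
    show "axiom_P2 L" by (fact assms(4))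
    show "0 < k" by (fact assms(5))
    show "k < n - 1" by (fact assms(6))
    show "inj_on p {1..n+1}" by (fact assms(7))
    show "is_base P L (p ` {1..n+1})" by (fact assms(8))
  qed
  show ?thesis by (rule final[OF assms(9)])
qed

end
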